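(* Let $t=[1\ 0\ 0\ 0\ 0\ 0\ 0\ 0]$ (row vector), $u=[1\ 1\ 1\ 1\ 1\ 2\ 1\ 4]^T$ (column vector), and \[\gamma(0)=\begin{bmatrix} 0&1&0&0&0&0&0&0\\ 0&0&0&1&0&0&0&0\\ -1&1&0&1&0&0&0&0\\ 0&0&0&0&1&0&0&0\\ 0&0&0&0&0&0&1&0\\ -1&0&0&2&1&0&0&0\\ 1&-1&0&-3&3&0&1&0\\ -1&-1&0&2&3&0&1&0 \end{bmatrix},\quad \gamma(1)=\begin{bmatrix} 0&0&1&0&0&0&0&0\\ 0&0&1&0&0&0&0&0\\ 0&0&0&0&0&0&0&0\\ 0&0&0&0&0&1&0&0\\ 0&0&0&0&0&1&0&0\\ 0&0&0&0&0&0&0&0\\ 0&0&0&0&0&0&0&1\\ 0&0&0&0&0&0&0&0 \end{bmatrix},\] extended to a monoid morphism $\gamma:\{0,1\}^*\to\mathbb{Z}^{8\times 8}$ by $\gamma(w_1w_2\cdots w_m)=\gamma(w_1)\gamma(w_2)\cdots\gamma(w_m)$. Then for every $n\geq 0$, if $z=z_1\cdots z_m$ is the canonical Fibonacci representation of $n$ and $z^R=z_m\cdots z_1$ is its reversal, we have $t\,\gamma(z^R)\,u=V(n)$. In particular, $V$ is Fibonacci-regular.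
   Context: Fibonacci numbers: $F_0=0$, $F_1=1$, $F_{m+2}=F_{m+1}+F_m$. For a word $k_m\cdots k_0$ of nonnegative integer digits, $[k_m\cdots k_0]_F=\sum_{i=0}^m k_iF_{i+2}$. The canonical Fibonacci representation of $n\geq 0$ is the unique binary word $z$ with no leading zero and no two consecutive $1$s such that $[z]_F=n$ (the empty word for $n=0$). Standard Fibonacci words: $f_{-1}=b$, $f_0=a$, $f_{m+1}=f_mf_{m-1}$. The Fibonacci word ${\bf f}=\lim f_m$, with prefix of length $j$ denoted ${\bf f}(0..j]$. $V(N)$ is the number of factorizations of ${\bf f}(0..N]$ as $f_m^{k_m}\cdots f_0^{k_0}$ with all $k_i\geq 0$ (into standard words $f_i$, $i\geq0$, in non-strictly decreasing order of index), counted up to leading zero exponents; $V(0)=1$. A sequence $s$ is Fibonacci-regular if there are a row vector $v$, a column vector $w$ and a matrix-valued morphism $\rho$ on $\{0,1\}^*$ with $s([z]_F)=v\rho(z)w$ for all canonical representations $z$. *)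

theory Defs
  imports "HOL-Number_Theory.Fib" "Jordan_Normal_Form.Matrix"
begin

text \<open>Binary words are lists of booleans written most significant digit first
  (True = digit 1). [k_m ... k_0]_F = sum k_i F_(i+2).\<close>

definition fib_val :: "bool list \<Rightarrow> nat" where
  "fib_val z = (\<Sum>i<length z. (if rev z ! i then fib (i + 2) else 0))"

definition canonical_fib_rep :: "bool list \<Rightarrow> nat \<Rightarrow> bool" where
  "canonical_fib_rep z n \<longleftrightarrow>
     (z = [] \<or> hd z) \<and>
     (\<forall>i. Suc i < length z \<longrightarrow> \<not> (z ! i \<and> z ! Suc i)) \<and>
     fib_val z = n"

datatype letter = a | b

text \<open>fstd' (m+1) is the standard word f_m; fstd' 0 = f_(-1) = b.\<close>
fun fstd' :: "nat \<Rightarrow> letter list" where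
  "fstd' 0 = [b]"
| "fstd' (Suc 0) = [a]"
| "fstd' (Suc (Suc m)) = fstd' (Suc m) @ fstd' m"

definition fstd :: "nat \<Rightarrow> letter list" where
  "fstd m = fstd' (Suc m)"

text \<open>The infinite Fibonacci word as the limit of the f_m: its i-th letter is the
  i-th letter of f_i (which has length F_(i+2) > i, and each f_m is a prefix of f_(m+1)).\<close>
definition fibword :: "nat \<Rightarrow> letter" where
  "fibword i = fstd i ! i"

definition fib_prefix :: "nat \<Rightarrow> letter list" where
  "fib_prefix N = map fibword [0..<N]"

text \<open>For ks = [k_0, ..., k_m], the word f_m^(k_m) ... f_0^(k_0).\<close>
definition fact_word :: "nat list \<Rightarrow> letter list" where
  "fact_word ks = concat (rev (map (\<lambda>i. concat (replicate (ks ! i) (fstd i))) [0..<length ks]))"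

text \<open>Factorizations counted up to leading zero exponents: exponent lists with
  nonzero top exponent (the empty list being the empty factorization).\<close>
definition V :: "nat \<Rightarrow> nat" where
  "V N = card {ks. (ks = [] \<or> last ks \<noteq> 0) \<and> fact_word ks = fib_prefix N}"

definition mat_morph :: "nat \<Rightarrow> (bool \<Rightarrow> int mat) \<Rightarrow> bool list \<Rightarrow> int mat" where
  "mat_morph d \<rho> w = foldr (\<lambda>c M. \<rho> c * M) w (1\<^sub>m d)"

definition fib_regular :: "(nat \<Rightarrow> int) \<Rightarrow> bool" where
  "fib_regular s \<longleftrightarrow> (\<exists>d v w \<rho>. v \<in> carrier_mat 1 d \<and> w \<in> carrier_mat d 1 \<and>
      (\<forall>c. \<rho> c \<in> carrier_mat d d) \<and>
      (\<forall>z n. canonical_fib_rep z n \<longrightarrow> s n = (v * mat_morph d \<rho> z * w) $$ (0, 0)))"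

definition t_vec :: "int mat" where
  "t_vec = mat_of_rows_list 8 [[1,0,0,0,0,0,0,0]]"

definition u_vec :: "int mat" where
  "u_vec = mat_of_cols_list 8 [[1,1,1,1,1,2,1,4]]"

definition gamma0 :: "int mat" where
  "gamma0 = mat_of_rows_list 8
    [[ 0, 1,0, 0,0,0,0,0],
     [ 0, 0,0, 1,0,0,0,0],
     [-1, 1,0, 1,0,0,0,0],
     [ 0, 0,0, 0,1,0,0,0],
     [ 0, 0,0, 0,0,0,1,0],
     [-1, 0,0, 2,1,0,0,0],
     [ 1,-1,0,-3,3,0,1,0],
     [-1,-1,0, 2,3,0,1,0]]"

definition gamma1 :: "int mat" where
  "gamma1 = mat_of_rows_list 8
    [[0,0,1,0,0,0,0,0],
     [0,0,1,0,0,0,0,0],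
     [0,0,0,0,0,0,0,0],
     [0,0,0,0,0,1,0,0],
     [0,0,0,0,0,1,0,0],
     [0,0,0,0,0,0,0,0],
     [0,0,0,0,0,0,0,1],
     [0,0,0,0,0,0,0,0]]"

definition gamma :: "bool \<Rightarrow> int mat" where
  "gamma c = (if c then gamma1 else gamma0)"

end

theory Submission
  imports Defs
begin

fun phl :: "letter \<Rightarrow> letter list" where
  "phl a = [a,b]" | "phl b = [a]"

definition phi :: "letter list \<Rightarrow> letter list" where
  "phi w = concat (map phl w)"

lemma phi_Nil[simp]: "phi [] = []" and phi_Cons[simp]: "phi (c#w) = phl c @ phi w"
  and phi_append[simp]: "phi (u @ v) = phi u @ phi v"
  by (simp_all add: phi_def)

lemma phl_ne[simp]: "phl c \<noteq> []" by (cases c) auto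

lemma phi_Nil_iff[simp]: "phi w = [] \<longleftrightarrow> w = []"
  by (simp add: phi_def)

lemma phi_Nil_iff'[simp]: "[] = phi w \<longleftrightarrow> w = []"
  by (metis phi_Nil_iff)

lemma phi_hd: "w \<noteq> [] \<Longrightarrow> \<exists>v. phi w = a # v"
  by (cases w; cases "hd w") auto

lemma phi_inj: "phi u = phi v \<Longrightarrow> u = v"
proof (induction u arbitrary: v)
  case Nil then show ?case by (metis phi_Nil_iff)
next
  case (Cons c u)
  then obtain d v' where v: "v = d # v'" by (cases v) auto
  have "phl c @ phi u = phl d @ phi v'" using Cons.prems v by simp
  moreover have "c = d"
  proof (rule ccontr)
    assume "c \<noteq> d"
    then have "(c = a \<and> d = b) \<or> (c = b \<and> d = a)" by (cases c; cases d) auto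
    then show False
    proof
      assume "c = a \<and> d = b"
      then have "a # b # phi u = a # phi v'" using calculation by simp
      then have "phi v' = b # phi u" by simp
      then show False using phi_hd[of v'] by (cases "v' = []") auto
    next
      assume "c = b \<and> d = a"
      then have "a # phi u = a # b # phi v'" using calculation by simp
      then have "phi u = b # phi v'" by simp
      then show False using phi_hd[of u] by (cases "u = []") auto
    qed
  qed
  ultimately show ?case using Cons.IH v by simp
qed

lemma phi_concat: "phi (concat L) = concat (map phi L)"
  by (induction L) auto

lemma phi_replicate: "phi (concat (replicate k w)) = concat (replicate k (phi w))"
  by (induction k) auto

lemma phi_fstd': "phi (fstd' k) = fstd' (Suc k)"
  by (induction k rule: fstd'.induct) auto

lemma fstd_Suc: "fstd (Suc m) = phi (fstd m)"
  by (simp add: fstd_def phi_fstd')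

lemma fact_word_Nil[simp]: "fact_word [] = []"
  by (simp add: fact_word_def)

lemma fact_word_Cons: "fact_word (k # ks) = phi (fact_word ks) @ replicate k a"
proof -
  define g where "g = (\<lambda>i. concat (replicate ((k#ks) ! i) (fstd i)))"
  have u: "[0..<length (k#ks)] = 0 # map Suc [0..<length ks]"
    by (simp add: map_Suc_upt upt_conv_Cons del: upt_Suc)
  have g0: "g 0 = replicate k a"
    by (simp add: g_def fstd_def)
  have gS: "g (Suc i) = phi (concat (replicate (ks ! i) (fstd i)))" for i
    by (simp add: g_def phi_replicate fstd_Suc)
  have "fact_word (k#ks) = concat (rev (map g [0..<length (k#ks)]))"
    by (simp add: fact_word_def g_def)
  also have "\<dots> = concat (rev (map (g \<circ> Suc) [0..<length ks])) @ g 0"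
    unfolding u by (simp del: upt_Suc)
  also have "map (g \<circ> Suc) [0..<length ks] = map (phi \<circ> (\<lambda>i. concat (replicate (ks ! i) (fstd i)))) [0..<length ks]"
    by (simp add: gS)
  also have "concat (rev \<dots>) = phi (fact_word ks)"
    by (simp add: fact_word_def phi_concat rev_map)
  finally show ?thesis by (simp add: g0)
qed

lemma len_phi: "length w \<le> length (phi w)"
  by (induction w) (auto, case_tac a, auto)

lemma len_phi_a: "a \<in> set w \<Longrightarrow> length w < length (phi w)"
proof (induction w)
  case Nil then show ?case by simp
next
  case (Cons c w)
  then show ?case using len_phi[of w] by (cases c) auto
qed

lemma a_in_phi: "w \<noteq> [] \<Longrightarrow> a \<in> set (phi w)"
  using phi_hd[of w] by auto

lemma fw_nth_le: "i < length ks \<Longrightarrow> ks ! i \<le> length (fact_word ks)"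
proof (induction ks arbitrary: i)
  case Nil then show ?case by simp
next
  case (Cons k ks)
  show ?case
  proof (cases i)
    case 0 then show ?thesis by (simp add: fact_word_Cons)
  next
    case (Suc j)
    then have "ks ! j \<le> length (fact_word ks)" using Cons by simp
    then show ?thesis using Suc len_phi[of "fact_word ks"] by (simp add: fact_word_Cons)
  qed
qed

lemma fw_len: "ks \<noteq> [] \<Longrightarrow> last ks \<noteq> 0 \<Longrightarrow> a \<in> set (fact_word ks) \<and> length ks \<le> length (fact_word ks)"
proof (induction ks)
  case Nil then show ?case by simp
next
  case (Cons k ks)
  show ?case
  proof (cases "ks = []")
    case True
    then show ?thesis using Cons.prems by (simp add: fact_word_Cons)
  next
    case False
    then have IH: "a \<in> set (fact_word ks) \<and> length ks \<le> length (fact_word ks)"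
      using Cons by simp
    then have "fact_word ks \<noteq> []" by auto
    then show ?thesis using IH len_phi_a[of "fact_word ks"] a_in_phi[of "fact_word ks"]
      by (simp add: fact_word_Cons)
  qed
qed

definition S :: "letter list \<Rightarrow> nat list set" where
  "S x = {ks. (ks = [] \<or> last ks \<noteq> 0) \<and> fact_word ks = x}"

definition Nc :: "letter list \<Rightarrow> nat" where
  "Nc x = card (S x)"

lemma V_Nc: "V n = Nc (fib_prefix n)"
  by (simp add: V_def Nc_def S_def)

lemma finite_S: "finite (S x)"
proof -
  have "S x \<subseteq> {ks. set ks \<subseteq> {0..length x} \<and> length ks \<le> Suc (length x)}"
  proof
    fix ks assume "ks \<in> S x"
    then have ks: "(ks = [] \<or> last ks \<noteq> 0)" "fact_word ks = x" by (auto simp: S_def)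
    have "set ks \<subseteq> {0..length x}"
    proof
      fix k assume "k \<in> set ks"
      then obtain i where "i < length ks" "ks ! i = k" by (auto simp: in_set_conv_nth)
      then show "k \<in> {0..length x}" using fw_nth_le[of i ks] ks by auto
    qed
    moreover have "length ks \<le> Suc (length x)" using ks fw_len[of ks] by (cases "ks = []") auto
    ultimately show "ks \<in> {ks. set ks \<subseteq> {0..length x} \<and> length ks \<le> Suc (length x)}" by simp
  qed
  moreover have "finite {ks. set ks \<subseteq> {0..length x} \<and> length ks \<le> Suc (length x)}"
    by (rule finite_lists_length_le) simp
  ultimately show ?thesis by (rule finite_subset)
qed

lemma S_Nil: "S [] = {[]}"
proof -
  have "ks = []" if "ks \<in> S []" for ks
    using that fw_len[of ks] by (auto simp: S_def)
  then show ?thesis by (auto simp: S_def)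
qed

lemma Nc_Nil[simp]: "Nc [] = 1"
  by (simp add: Nc_def S_Nil)

lemma S_ne: "x \<noteq> [] \<Longrightarrow> ks \<in> S x \<Longrightarrow> ks \<noteq> []"
  by (auto simp: S_def)

lemma Nc_split: "x \<noteq> [] \<Longrightarrow> Nc x = card {ks\<in>S x. hd ks = 0} + card {ks\<in>S x. hd ks \<noteq> 0}"
proof -
  have "S x = {ks\<in>S x. hd ks = 0} \<union> {ks\<in>S x. hd ks \<noteq> 0}" by auto
  moreover have "finite {ks\<in>S x. hd ks = 0}" "finite {ks\<in>S x. hd ks \<noteq> 0}"
    using finite_S by auto
  ultimately show ?thesis unfolding Nc_def
    by (metis (no_types, lifting) card_Un_disjoint disjoint_iff mem_Collect_eq)
qed

lemma C0: assumes y: "y \<noteq> []" shows "{ks\<in>S (phi y). hd ks = 0} = Cons 0 ` S y"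
proof (rule Set.set_eqI, rule iffI)
  fix ks assume ks: "ks \<in> {ks\<in>S (phi y). hd ks = 0}"
  then have "ks \<noteq> []" using S_ne[of "phi y" ks] y by auto
  then obtain ks' where ks': "ks = 0 # ks'" using ks by (cases ks) auto
  then have fw: "phi (fact_word ks') = phi y" using ks by (auto simp: S_def fact_word_Cons)
  then have "fact_word ks' = y" by (rule phi_inj)
  moreover have "ks' \<noteq> []" using fw y by auto
  moreover have "last ks' \<noteq> 0" using ks ks' \<open>ks' \<noteq> []\<close> by (auto simp: S_def)
  ultimately show "ks \<in> Cons 0 ` S y" using ks' by (auto simp: S_def)
next
  fix ks assume ks: "ks \<in> Cons 0 ` S y"
  then obtain ks' where ks': "ks = 0 # ks'" "ks' \<in> S y" by auto
  then have "ks' \<noteq> []" using S_ne y by auto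
  then show "ks \<in> {ks\<in>S (phi y). hd ks = 0}" using ks' by (auto simp: S_def fact_word_Cons)
qed

lemma card_C0: "y \<noteq> [] \<Longrightarrow> card {ks\<in>S (phi y). hd ks = 0} = Nc y"
  by (simp add: C0 Nc_def card_image)

lemma C0': "x \<noteq> [] \<Longrightarrow> (\<And>y. x \<noteq> phi y) \<Longrightarrow> {ks\<in>S x. hd ks = 0} = {}"
proof (rule ccontr)
  assume x: "x \<noteq> []" "\<And>y. x \<noteq> phi y" "{ks\<in>S x. hd ks = 0} \<noteq> {}"
  then obtain ks where ks: "ks \<in> S x" "hd ks = 0" by auto
  then have "ks \<noteq> []" using S_ne x by auto
  then obtain ks' where "ks = 0 # ks'" using ks by (cases ks) auto
  then have "x = phi (fact_word ks')" using ks by (auto simp: S_def fact_word_Cons)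
  then show False using x by auto
qed

lemma fact_word_Suc: "fact_word (Suc k # ks) = fact_word (k # ks) @ [a]"
  by (simp add: fact_word_Cons replicate_append_same)

fun gi :: "nat list \<Rightarrow> nat list" where
  "gi [] = [1]" | "gi (k # ks) = Suc k # ks"

lemma C1: "{ks\<in>S (y @ [a]). hd ks \<noteq> 0} = gi ` S y"
proof (rule Set.set_eqI, rule iffI)
  fix ks assume ks: "ks \<in> {ks\<in>S (y @ [a]). hd ks \<noteq> 0}"
  then have "ks \<noteq> []" using S_ne[of "y@[a]" ks] by auto
  then obtain k ks' where ks': "ks = Suc k # ks'" using ks by (cases ks; cases "hd ks") auto
  have fw: "fact_word (k # ks') = y"
    using ks ks' by (auto simp: S_def fact_word_Suc)
  show "ks \<in> gi ` S y"
  proof (cases "k = 0 \<and> ks' = []")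
    case True
    then have "y = []" using fw by (simp add: fact_word_Cons)
    then show ?thesis using ks' True by (auto simp: S_Nil)
  next
    case False
    then have "k # ks' \<in> S y" using fw ks ks' by (auto simp: S_def)
    then show ?thesis using ks' by force
  qed
next
  fix ks assume "ks \<in> gi ` S y"
  then obtain ks' where ks': "ks = gi ks'" "ks' \<in> S y" by auto
  show "ks \<in> {ks\<in>S (y @ [a]). hd ks \<noteq> 0}"
  proof (cases ks')
    case Nil
    then show ?thesis using ks' by (auto simp: S_def fact_word_Cons)
  next
    case (Cons k ks'')
    then show ?thesis using ks' by (auto simp: S_def fact_word_Suc)
  qed
qed

lemma inj_gi: "inj_on gi (S y)"
proof (rule inj_onI)
  fix u v assume u: "u \<in> S y" and v: "v \<in> S y" and e: "gi u = gi v"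
  show "u = v"
  proof (cases u; cases v)
    fix k us l vs assume "u = k # us" "v = l # vs" then show "u = v" using e by simp
  next
    fix k us assume uu: "u = k # us" "v = []"
    then have "k = 0" "us = []" using e by auto
    then show "u = v" using u uu by (auto simp: S_def)
  next
    fix l vs assume uu: "u = []" "v = l # vs"
    then have "l = 0" "vs = []" using e by auto
    then show "u = v" using v uu by (auto simp: S_def)
  qed simp
qed

lemma card_C1: "card {ks\<in>S (y @ [a]). hd ks \<noteq> 0} = Nc y"
  unfolding C1 Nc_def by (rule card_image[OF inj_gi])

lemma C1': "x \<noteq> [] \<Longrightarrow> (\<And>y. x \<noteq> y @ [a]) \<Longrightarrow> {ks\<in>S x. hd ks \<noteq> 0} = {}"
proof (rule ccontr)
  assume x: "x \<noteq> []" "\<And>y. x \<noteq> y @ [a]" "{ks\<in>S x. hd ks \<noteq> 0} \<noteq> {}"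
  then obtain ks where ks: "ks \<in> S x" "hd ks \<noteq> 0" by auto
  then have "ks \<noteq> []" using S_ne x by auto
  then obtain k ks' where "ks = Suc k # ks'" using ks by (cases ks; cases "hd ks") auto
  then have "x = fact_word (k # ks') @ [a]" using ks
    by (auto simp: S_def fact_word_Suc)
  then show False using x by blast
qed

lemma phi_snoc_a: "phi (x @ [a]) = phi x @ [a, b]" by simp
lemma phi_snoc_b: "phi (x @ [b]) = phi x @ [a]" by simp

lemma phi_not_bb: "phi y \<noteq> x @ [b, b]"
proof (cases y rule: rev_exhaust)
  case Nil then show ?thesis by simp
next
  case (snoc y' c)
  show ?thesis
  proof (cases c)
    case a
    show ?thesis
    proof
      assume "phi y = x @ [b, b]"
      then have "rev (phi y) = rev (x @ [b,b])" by simp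
      then show False using snoc a by simp
    qed
  next
    case b
    show ?thesis
    proof
      assume "phi y = x @ [b, b]"
      then have "rev (phi y) = rev (x @ [b,b])" by simp
      then show False using snoc b by simp
    qed
  qed
qed


lemma W0: assumes "\<And>u. x \<noteq> u @ [b]" shows "Nc (phi x) = Nc x"
proof (cases "x = []")
  case True then show ?thesis by simp
next
  case False
  then obtain x' c where x: "x = x' @ [c]" by (cases x rule: rev_exhaust) auto
  then have c: "c = a" using assms by (cases c) auto
  have "{ks\<in>S (phi x). hd ks \<noteq> 0} = {}"
  proof (rule C1')
    show "phi x \<noteq> []" using False by simp
    fix y show "phi x \<noteq> y @ [a]"
    proof
      assume "phi x = y @ [a]"
      then have "rev (phi x) = rev (y @ [a])" by simp
      then show False using x c by simp
    qed
  qed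
  then have "card {ks\<in>S (phi x). hd ks \<noteq> 0} = 0" by (simp only: card.empty)
  then show ?thesis using Nc_split[of "phi x"] card_C0[OF False] False by simp
qed


lemma W1: "Nc (phi x @ [a]) = Nc (x @ [b]) + Nc (phi x)"
proof -
  have h1: "card {ks\<in>S (phi x @ [a]). hd ks = 0} = Nc (x@[b])"
    using card_C0[of "x@[b]"] by simp
  have h2: "card {ks\<in>S (phi x @ [a]). hd ks \<noteq> 0} = Nc (phi x)" by (rule card_C1)
  have h3: "Nc (phi x @ [a]) = card {ks\<in>S (phi x @ [a]). hd ks = 0} + card {ks\<in>S (phi x @ [a]). hd ks \<noteq> 0}"
    by (rule Nc_split) simp
  show ?thesis unfolding h3 h1 h2 ..
qed

lemma Wbb: "Nc (x @ [b, b]) = 0"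
proof -
  have "{ks\<in>S (x @ [b,b]). hd ks = 0} = {}"
    apply (rule C0') apply simp using phi_not_bb by metis
  moreover have "{ks\<in>S (x @ [b,b]). hd ks \<noteq> 0} = {}"
  proof (rule C1')
    fix y show "x @ [b, b] \<noteq> y @ [a]"
    proof
      assume "x @ [b, b] = y @ [a]"
      then have "rev (x @ [b, b]) = rev (y @ [a])" by simp
      then show False by simp
    qed
  qed simp
  ultimately show ?thesis using Nc_split[of "x @ [b,b]"] by simp
qed

lemma Wb: "Nc [b] = 0"
proof -
  have "{ks\<in>S [b]. hd ks = 0} = {}"
  proof (rule C0')
    fix y show "[b] \<noteq> phi y" using phi_hd[of y] by (cases "y = []") auto
  qed simp
  moreover have "{ks\<in>S [b]. hd ks \<noteq> 0} = {}"
  proof (rule C1')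
    fix y show "[b] \<noteq> y @ [a]" by (cases y) auto
  qed simp
  ultimately show ?thesis using Nc_split[of "[b]"] by simp
qed

fun Xr :: "bool list \<Rightarrow> letter list" where
  "Xr [] = []"
| "Xr (c # z) = phi (Xr z) @ (if c then [a] else [])"

definition X :: "bool list \<Rightarrow> letter list" where
  "X z = Xr (rev z)"

lemma X_Nil[simp]: "X [] = []" by (simp add: X_def)
lemma X_F: "X (z @ [False]) = phi (X z)" by (simp add: X_def)
lemma X_T: "X (z @ [True]) = phi (X z) @ [a]" by (simp add: X_def)

fun Xa :: "letter list \<Rightarrow> bool list \<Rightarrow> letter list" where
  "Xa x [] = x"
| "Xa x (c # w) = Xa (phi x @ (if c then [a] else [])) w"

lemma X_append: "X (z @ w) = Xa (X z) w"
proof (induction w arbitrary: z)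
  case Nil then show ?case by simp
next
  case (Cons c w)
  have "X (z @ c # w) = X ((z @ [c]) @ w)" by simp
  also have "\<dots> = Xa (X (z @ [c])) w" by (rule Cons.IH)
  also have "X (z @ [c]) = phi (X z) @ (if c then [a] else [])"
    by (cases c) (simp_all add: X_F X_T)
  finally show ?case by simp
qed

lemma phi_eq_snoc_b: "phi x = u @ [b] \<Longrightarrow> \<exists>x'. x = x' @ [a] \<and> u = phi x' @ [a]"
proof (cases x rule: rev_exhaust)
  case Nil
  assume "phi x = u @ [b]" then show ?thesis using Nil by simp
next
  case (snoc x' c)
  assume h: "phi x = u @ [b]"
  then show ?thesis using snoc by (cases c) auto
qed

lemma phi_eq_snoc_a: "phi x = u @ [a] \<Longrightarrow> \<exists>x'. x = x' @ [b] \<and> u = phi x'"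
proof (cases x rule: rev_exhaust)
  case Nil
  assume "phi x = u @ [a]" then show ?thesis using Nil by simp
next
  case (snoc x' c)
  assume h: "phi x = u @ [a]"
  then show ?thesis using snoc by (cases c) auto
qed

lemma dec: "(X z = u @ [b] \<longrightarrow> (\<exists>w. u = X (w @ [True]))) \<and> (X z = u @ [a] \<longrightarrow> (\<exists>w. u = X w))"
proof (induction z arbitrary: u rule: rev_induct)
  case Nil then show ?case by simp
next
  case (snoc c z)
  show ?case
  proof (cases c)
    case True
    then show ?thesis using X_F[of z] by (simp add: X_T) metis
  next
    case False
    have XF: "X (z @ [c]) = phi (X z)" using False by (simp add: X_F)
    show ?thesis
    proof (intro conjI impI)
      assume "X (z @ [c]) = u @ [b]"
      then obtain x' where x': "X z = x' @ [a]" "u = phi x' @ [a]"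
        using phi_eq_snoc_b XF by metis
      then obtain w where "x' = X w" using snoc.IH by blast
      then show "\<exists>w. u = X (w @ [True])" using x' by (auto simp: X_T)
    next
      assume "X (z @ [c]) = u @ [a]"
      then obtain x' where x': "X z = x' @ [b]" "u = phi x'"
        using phi_eq_snoc_a XF by metis
      then obtain w where "x' = X (w @ [True])" using snoc.IH by blast
      then have "u = X ((w @ [True]) @ [False])" using x' by (simp only: X_F)
      then show "\<exists>w. u = X w" by blast
    qed
  qed
qed

lemma dec_b: "X z = u @ [b] \<Longrightarrow> \<exists>w. u = X (w @ [True])"
  using dec by blast

definition pref :: "'x list \<Rightarrow> 'x list \<Rightarrow> bool" where
  "pref xs ys \<longleftrightarrow> (\<exists>t. ys = xs @ t)"

lemma fstd_0: "fstd 0 = [a]" by (simp add: fstd_def)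
lemma fstd_SS: "fstd (Suc (Suc m)) = fstd (Suc m) @ fstd m" by (simp add: fstd_def)
lemma fstd_S: "fstd (Suc m) = fstd m @ fstd' m" by (simp add: fstd_def)

lemma fstd'_ne: "fstd' m \<noteq> []"
  by (induction m rule: fstd'.induct) auto

lemma fstd_len: "i < length (fstd i)"
proof (induction i)
  case 0 then show ?case by (simp add: fstd_0)
next
  case (Suc i)
  have h: "1 \<le> length (fstd' i)" using fstd'_ne[of i] by (cases "fstd' i") auto
  show ?case using Suc.IH h by (simp add: fstd_S)
qed

lemma fstd'_len: "length (fstd' k) = fib (Suc k) \<and> length (fstd' (Suc k)) = fib (Suc (Suc k))"
  by (induction k) (auto simp: numeral_eq_Suc)

lemma fstd_length: "length (fstd m) = fib (m + 2)"
  using fstd'_len[of m] by (simp add: fstd_def)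

lemma pref_fstd: "m \<le> m' \<Longrightarrow> pref (fstd m) (fstd m')"
proof (induction m' rule: dec_induct)
  case base then show ?case by (simp add: pref_def)
next
  case (step n) then show ?case by (auto simp: pref_def fstd_S)
qed

lemma pref_nth: "pref xs ys \<Longrightarrow> i < length xs \<Longrightarrow> ys ! i = xs ! i"
  by (auto simp: pref_def nth_append)

lemma fib_prefix_take: "n \<le> length (fstd m) \<Longrightarrow> fib_prefix n = take n (fstd m)"
proof (rule nth_equalityI)
  assume n: "n \<le> length (fstd m)"
  show "length (fib_prefix n) = length (take n (fstd m))" using n by (simp add: fib_prefix_def)
  fix i assume "i < length (fib_prefix n)"
  then have i: "i < n" by (simp add: fib_prefix_def)
  have "fstd i ! i = fstd m ! i"
  proof (cases "i \<le> m")
    case True then show ?thesis using pref_nth[OF pref_fstd[OF True] fstd_len] by simp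
  next
    case False
    then have mi: "m \<le> i" by simp
    show ?thesis using pref_nth[OF pref_fstd[OF mi], of i] i n by simp
  qed
  then show "fib_prefix n ! i = take n (fstd m) ! i" using i by (simp add: fib_prefix_def fibword_def)
qed

lemma Xr_snoc: "Xr (zr @ [c]) = (if c then fstd (length zr) else []) @ Xr zr"
  by (induction zr) (auto simp: fstd_0 fstd_Suc)

lemma X_Cons: "X (c # z) = (if c then fstd (length z) else []) @ X z"
  by (simp add: X_def Xr_snoc)

lemma fib_val_Cons: "fib_val (c # z) = (if c then fib (length z + 2) else 0) + fib_val z"
proof -
  have "fib_val (c # z) = (\<Sum>i<Suc (length z). (if (rev z @ [c]) ! i then fib (i + 2) else 0))"
    by (simp add: fib_val_def)
  also have "\<dots> = (\<Sum>i<length z. (if (rev z @ [c]) ! i then fib (i + 2) else 0)) + (if c then fib (length z + 2) else 0)"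
    by (simp add: nth_append)
  also have "(\<Sum>i<length z. (if (rev z @ [c]) ! i then fib (i + 2) else 0)) = fib_val z"
    unfolding fib_val_def by (rule sum.cong) (auto simp: nth_append)
  finally show ?thesis by simp
qed

lemma fib_val_Nil[simp]: "fib_val [] = 0" by (simp add: fib_val_def)

lemma X_length: "length (X z) = fib_val z"
  by (induction z) (auto simp: X_Cons fib_val_Cons fstd_length)

definition adjfree :: "bool list \<Rightarrow> bool" where
  "adjfree z \<longleftrightarrow> (\<forall>i. Suc i < length z \<longrightarrow> \<not> (z ! i \<and> z ! Suc i))"

lemma adjfree_Cons: "adjfree (c # z) \<Longrightarrow> adjfree z"
  unfolding adjfree_def by (metis Suc_less_eq length_Cons nth_Cons_Suc)

lemma X_pref: "adjfree z \<Longrightarrow> pref (X z) (fstd (length z))"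
proof (induction "length z" arbitrary: z rule: less_induct)
  case less
  show ?case
  proof (cases z)
    case Nil then show ?thesis by (simp add: pref_def)
  next
    case (Cons c z')
    have IH': "pref (X z') (fstd (length z'))"
      using less Cons adjfree_Cons by auto
    show ?thesis
    proof (cases c)
      case False
      then show ?thesis using IH' Cons pref_fstd[of "length z'" "Suc (length z')"]
        by (auto simp: X_Cons pref_def)
    next
      case True
      show ?thesis
      proof (cases z')
        case Nil then show ?thesis using Cons True by (simp add: X_Cons pref_def fstd_0 fstd_S)
      next
        case (Cons d z'')
        have "d = False" using less.prems \<open>z = c # z'\<close> True Cons
          unfolding adjfree_def by (metis Suc_less_eq length_Cons nth_Cons_0 nth_Cons_Suc zero_less_Suc)
        then have Xz': "X z' = X z''" using Cons by (simp add: X_Cons)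
        have "adjfree z''" using less.prems \<open>z = c # z'\<close> Cons adjfree_Cons by metis
        then have "pref (X z'') (fstd (length z''))"
          using less.hyps \<open>z = c # z'\<close> Cons by auto
        then show ?thesis using \<open>z = c # z'\<close> True Cons Xz'
          by (auto simp: X_Cons pref_def fstd_SS)
      qed
    qed
  qed
qed

lemma canon_prefix: "canonical_fib_rep z n \<Longrightarrow> fib_prefix n = X z"
proof -
  assume c: "canonical_fib_rep z n"
  then have af: "adjfree z" and n: "fib_val z = n" by (auto simp: canonical_fib_rep_def adjfree_def)
  have p: "pref (X z) (fstd (length z))" by (rule X_pref[OF af])
  have ln: "length (X z) = n" using n X_length by simp
  then have "n \<le> length (fstd (length z))" using p by (auto simp: pref_def)
  then have "fib_prefix n = take n (fstd (length z))" by (rule fib_prefix_take)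
  also have "\<dots> = X z" using p ln by (auto simp: pref_def)
  finally show ?thesis .
qed

lemma W0a: "Nc (phi (x @ [a])) = Nc (x @ [a])"
  by (rule W0) simp

lemma W1i: "int (Nc (phi x @ [a])) = int (Nc (x @ [b])) + int (Nc (phi x))"
  using W1[of x] by simp

definition p :: "bool list \<Rightarrow> int" where
  "p z = int (Nc (X z))"

lemma key1: "int (Nc (phi (X y) @ [b])) = int (Nc (phi (X y))) - int (Nc (X y))"
proof (cases "X y" rule: rev_exhaust)
  case Nil then show ?thesis using Wb by simp
next
  case (snoc v c)
  show ?thesis
  proof (cases c)
    case a
    have "Nc (phi (X y) @ [b]) = 0" using Wbb[of "phi v @ [a]"] snoc a by simp
    moreover have "Nc (phi (X y)) = Nc (X y)" using W0a[of v] snoc a by simp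
    ultimately show ?thesis by simp
  next
    case b
    obtain w where u: "v = X (w @ [True])" using dec_b[of y v] snoc b by auto
    then have u': "v = phi (X w) @ [a]" by (simp add: X_T)
    have e1: "Nc (phi (X y) @ [b]) = Nc (v @ [a])" using W0a[of v] snoc b by simp
    have e2: "int (Nc (v @ [a])) = int (Nc v)"
      using W1i[of "X w @ [b]"] Wbb[of "X w"] u' by simp
    have e3: "int (Nc (phi (X y))) = int (Nc (X y)) + int (Nc (phi v))"
      using W1i[of v] snoc b by simp
    have e4: "Nc (phi v) = Nc v" using W0a[of "phi (X w)"] u' by simp
    show ?thesis using e1 e2 e3 e4 by simp
  qed
qed

lemma pA: "p (z @ [True, False]) = p (z @ [True])"
  using W0a[of "phi (X z)"] by (simp add: p_def X_append)

lemma pC: "p (z @ [True, False, False, False]) = p (z @ [True, False, False])"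
  using W0a[of "phi (phi (phi (X z))) @ [a, b]"] by (simp add: p_def X_append)

lemma pB: "p (z @ [False, True]) = p (z @ [False]) - p z + p (z @ [False, False])"
  using W1i[of "phi (X z)"] key1[of z] by (simp add: p_def X_append)

lemma pD: "p (z @ [False, True, False, False]) = - p z + 2 * p (z @ [False, False]) + p (z @ [False, False, False])"
proof -
  have h1: "p (z @ [False, True, False, False]) = p (z @ [False, True, False]) + p (z @ [False, False, True, False])"
    using W1i[of "phi (phi (phi (X z))) @ [a]"] by (simp add: p_def X_append)
  have h2: "p (z @ [False, True, False]) = p (z @ [False, True])" using pA[of "z @ [False]"] by simp
  have h3: "p (z @ [False, False, True, False]) = p (z @ [False, False, True])" using pA[of "z @ [False, False]"] by simp
  have h4: "p (z @ [False, False, True]) = p (z @ [False, False]) - p (z @ [False]) + p (z @ [False, False, False])"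
    using pB[of "z @ [False]"] by simp
  show ?thesis using h1 h2 h3 h4 pB[of z] by simp
qed

lemma pF: "p (z @ [False, True, False, False, False, False]) =
   - p z - p (z @ [False]) + 2 * p (z @ [False, False]) + 3 * p (z @ [False, False, False]) + p (z @ [False, False, False, False])"
proof -
  have h1: "p (z @ [False, True, False, False, False, False]) = p (z @ [False, True, False, False, False]) + p (z @ [False, False, True, False, True, False])"
    using W1i[of "phi (phi (phi (phi (phi (X z))))) @ [a, b, a, a]"] by (simp add: p_def X_append)
  have h2: "p (z @ [False, True, False, False, False]) = p (z @ [False, True, False, False])"
    using pC[of "z @ [False]"] by simp
  have h3: "p (z @ [False, False, True, False, True, False]) = p (z @ [False, False, True, False, True])"
    using pA[of "z @ [False, False, True, False]"] by simp
  have h4: "p (z @ [False, False, True, False, True]) = p (z @ [False, False, True, False]) - p (z @ [False, False, True]) + p (z @ [False, False, True, False, False])"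
    using pB[of "z @ [False, False, True]"] by simp
  have h5: "p (z @ [False, False, True, False]) = p (z @ [False, False, True])" using pA[of "z @ [False, False]"] by simp
  have h6: "p (z @ [False, False, True, False, False]) = - p (z @ [False]) + 2 * p (z @ [False, False, False]) + p (z @ [False, False, False, False])"
    using pD[of "z @ [False]"] by simp
  show ?thesis using h1 h2 h3 h4 h5 h6 pD[of z] by simp
qed

lemma pE_aux: "p (w @ [True, False, True, False, True, False]) = 3 * p (w @ [True, False, True, False]) - p (w @ [True, False])"
proof -
  have h1: "p (w @ [True, False, True, False, True, False]) = p (w @ [True, False, True, False, True])"
    using pA[of "w @ [True, False, True, False]"] by simp
  have h2: "p (w @ [True, False, True, False, True]) = p (w @ [True, False, True, False]) - p (w @ [True, False, True]) + p (w @ [True, False, True, False, False])"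
    using pB[of "w @ [True, False, True]"] by simp
  have h3: "p (w @ [True, False, True, False]) = p (w @ [True, False, True])" using pA[of "w @ [True, False]"] by simp
  have h4: "p (w @ [True, False, True, False, False]) = - p (w @ [True]) + 2 * p (w @ [True, False, False]) + p (w @ [True, False, False, False])"
    using pD[of "w @ [True]"] by simp
  have h5: "p (w @ [True, False, True]) = p (w @ [True, False]) - p (w @ [True]) + p (w @ [True, False, False])"
    using pB[of "w @ [True]"] by simp
  have h6: "p (w @ [True, False]) = p (w @ [True])" by (rule pA)
  have h7: "p (w @ [True, False, False, False]) = p (w @ [True, False, False])" by (rule pC)
  show ?thesis using h1 h2 h3 h4 h5 h6 h7 by simp
qed

lemma pE: "p (z @ [False, False, False, False, False]) =
   p z - p (z @ [False]) - 3 * p (z @ [False, False]) + 3 * p (z @ [False, False, False]) + p (z @ [False, False, False, False])"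
proof (cases "X z" rule: rev_exhaust)
  case Nil then show ?thesis by (simp add: p_def X_append)
next
  case (snoc v c)
  show ?thesis
  proof (cases c)
    case a
    have h1: "p (z @ [False]) = p z" using W0a[of v] snoc a by (simp add: p_def X_append)
    have h2: "p (z @ [False, False, False]) = p (z @ [False, False])"
      using W0a[of "phi (phi v) @ [a, b]"] snoc a by (simp add: p_def X_append)
    have h3: "p (z @ [False, False, False, False, False]) = p (z @ [False, False, False, False])"
      using W0a[of "phi (phi (phi (phi v))) @ [a, b, a, a, b, a, b]"] snoc a by (simp add: p_def X_append)
    show ?thesis using h1 h2 h3 by simp
  next
    case b
    obtain w where u: "v = X (w @ [True])" using dec_b[of z v] snoc b by auto
    then have u': "v = phi (X w) @ [a]" by (simp add: X_T)
    have h1: "p (z @ [False]) = p z + p (w @ [True, False])"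
      using W1i[of v] snoc b u' by (simp add: p_def X_append)
    have h2: "p (z @ [False, False, False]) = p (z @ [False, False]) + p (w @ [True, False, True, False])"
      using W1i[of "phi (phi v) @ [a]"] snoc b u' by (simp add: p_def X_append)
    have h3: "p (z @ [False, False, False, False, False]) = p (z @ [False, False, False, False]) + p (w @ [True, False, True, False, True, False])"
      using W1i[of "phi (phi (phi (phi v))) @ [a, b, a, a]"] snoc b u' by (simp add: p_def X_append)
    show ?thesis using h1 h2 h3 pE_aux[of w] by simp
  qed
qed

fun nb :: "bool list \<Rightarrow> bool" where
  "nb [] = True"
| "nb [c] = True"
| "nb (c # d # z) = (\<not> (c \<and> d) \<and> nb (d # z))"

lemma nb_Cons: "nb (c # z) = (nb z \<and> \<not> (c \<and> z \<noteq> [] \<and> hd z))"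
  by (cases z) auto

lemma nb_append: "nb (xs @ ys) = (nb xs \<and> nb ys \<and> \<not> (xs \<noteq> [] \<and> ys \<noteq> [] \<and> last xs \<and> hd ys))"
  by (induction xs) (auto simp: nb_Cons)

lemma adjfree_nb: "adjfree z = nb z"
proof (induction z)
  case Nil then show ?case by (simp add: adjfree_def)
next
  case (Cons c z)
  have "adjfree (c # z) = (adjfree z \<and> \<not> (c \<and> z \<noteq> [] \<and> hd z))"
    unfolding adjfree_def
    apply (cases z)
     apply simp
    apply (auto simp: nth_Cons split: nat.splits)
    done
  then show ?case using Cons by (simp add: nb_Cons)
qed

definition pp :: "bool list \<Rightarrow> int" where
  "pp z = (if nb z then p z else 0)"

definition col8 :: "int list \<Rightarrow> int mat" where "col8 xs = mat_of_cols_list 8 [xs]"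

definition vec8 :: "bool list \<Rightarrow> int list" where
  "vec8 z = [pp z, pp (z @ [False]), pp (z @ [True]), pp (z @ [False, False]), pp (z @ [False, False, False]),
             pp (z @ [True, False, False]), pp (z @ [False, False, False, False]), pp (z @ [True, False, False, False, False])]"




lemma g0_step:
  "gamma0 * col8 [x1,x2,x3,x4,x5,x6,x7,x8] =
   col8 [x2, x4, -x1+x2+x4, x5, x7, -x1+2*x4+x5, x1-x2-3*x4+3*x5+x7, -x1-x2+2*x4+3*x5+x7]"
  apply (rule eq_matI)
  apply (simp_all add: col8_def gamma0_def mat_of_rows_list_def mat_of_cols_list_def scalar_prod_def
     less_Suc_eq numeral_eq_Suc)
  apply (auto simp: less_Suc_eq numeral_eq_Suc)
  done

lemma g1_step:
  "gamma1 * col8 [x1,x2,x3,x4,x5,x6,x7,x8] = col8 [x3, x3, 0, x6, x6, 0, x8, 0]"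
  apply (rule eq_matI)
  apply (simp_all add: col8_def gamma1_def mat_of_rows_list_def mat_of_cols_list_def scalar_prod_def
     less_Suc_eq numeral_eq_Suc)
  apply (auto simp: less_Suc_eq numeral_eq_Suc)
  done

lemma t_entry: "(t_vec * col8 [x1,x2,x3,x4,x5,x6,x7,x8]) $$ (0, 0) = x1"
  by (simp add: col8_def t_vec_def mat_of_rows_list_def mat_of_cols_list_def scalar_prod_def numeral_eq_Suc)

lemma g0c: "gamma0 \<in> carrier_mat 8 8"
  by (rule carrier_matI) (simp_all add: gamma0_def mat_of_rows_list_def)
lemma g1c: "gamma1 \<in> carrier_mat 8 8"
  by (rule carrier_matI) (simp_all add: gamma1_def mat_of_rows_list_def)
lemma gamma_carrier: "gamma c \<in> carrier_mat 8 8"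
  by (simp add: gamma_def g0c g1c)

lemma t_carrier: "t_vec \<in> carrier_mat 1 8"
  by (simp add: t_vec_def mat_of_rows_list_def)

lemma u_carrier: "u_vec \<in> carrier_mat 8 1"
  by (simp add: u_vec_def mat_of_cols_list_def)

lemma col8_carrier: "length xs = 8 \<Longrightarrow> col8 xs \<in> carrier_mat 8 1"
  by (simp add: col8_def mat_of_cols_list_def)


lemma base_vals: "vec8 [] = [1,1,1,1,1,2,1,4]"
proof -
  have e0: "p [] = 1" "p [False] = 1" "p [False, False] = 1" "p [False, False, False] = 1"
     "p [False, False, False, False] = 1"
    by (simp_all add: p_def X_def)
  have e1: "p [True] = 1" using pB[of "[]"] e0 by (simp add: p_def X_def)
  have e2: "p [True, False, False] = 2" using pD[of "[]"] e0 by (simp add: p_def X_def)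
  have e3: "p [True, False, False, False, False] = 4" using pF[of "[]"] e0 by (simp add: p_def X_def)
  show ?thesis using e0 e1 e2 e3 by (simp add: vec8_def pp_def)
qed

lemma mm_carrier: assumes "\<And>c. \<rho> c \<in> carrier_mat d d" shows "mat_morph d \<rho> w \<in> carrier_mat d d"
proof (induction w)
  case Nil show ?case by (simp add: mat_morph_def)
next
  case (Cons c w)
  have "mat_morph d \<rho> (c # w) = \<rho> c * mat_morph d \<rho> w" by (simp add: mat_morph_def)
  then show ?case using mult_carrier_mat[OF assms[of c] Cons.IH] by simp
qed

lemma mm_Cons: "mat_morph d \<rho> (c # w) = \<rho> c * mat_morph d \<rho> w"
  by (simp add: mat_morph_def)

lemma mm_append: "(\<And>c. \<rho> c \<in> carrier_mat d d) \<Longrightarrow>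
    mat_morph d \<rho> (xs @ ys) = mat_morph d \<rho> xs * mat_morph d \<rho> ys"
proof (induction xs)
  case Nil then show ?case using mm_carrier[of \<rho> d ys] by (simp add: mat_morph_def)
next
  case (Cons c xs)
  have "mat_morph d \<rho> ((c # xs) @ ys) = \<rho> c * (mat_morph d \<rho> xs * mat_morph d \<rho> ys)"
    using Cons by (simp add: mm_Cons)
  also have "\<dots> = (\<rho> c * mat_morph d \<rho> xs) * mat_morph d \<rho> ys"
    using Cons.prems mm_carrier[of \<rho> d] by (metis assoc_mult_mat)
  finally show ?case by (simp add: mm_Cons)
qed

lemma mm_single: "\<rho> c \<in> carrier_mat d d \<Longrightarrow> mat_morph d \<rho> [c] = \<rho> c"
  by (simp add: mat_morph_def)


lemma gF: "gamma False = gamma0" by (simp add: gamma_def)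
lemma gT: "gamma True = gamma1" by (simp add: gamma_def)

lemma pp_ext: "nb z \<Longrightarrow> w \<noteq> [] \<Longrightarrow> \<not> hd w \<Longrightarrow> nb w \<Longrightarrow> pp (z @ w) = p (z @ w)"
  by (simp add: pp_def nb_append)

lemma pp_ext1: "nb z \<Longrightarrow> \<not> (z \<noteq> [] \<and> last z) \<Longrightarrow> nb w \<Longrightarrow> pp (z @ w) = p (z @ w)"
  by (auto simp: pp_def nb_append)

lemma stepF: assumes nbz: "nb z" shows "gamma0 * col8 (vec8 z) = col8 (vec8 (z @ [False]))"
proof -
  have nbs: "nb (z @ w) = nb w" if "w \<noteq> []" "\<not> hd w" for w
    using nbz that by (simp add: nb_append)
  have q: "pp z = p z" "pp (z @ [False]) = p (z @ [False])" "pp (z @ [False, False]) = p (z @ [False, False])"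
    "pp (z @ [False, False, False]) = p (z @ [False, False, False])"
    "pp (z @ [False, False, False, False]) = p (z @ [False, False, False, False])"
    "pp (z @ [False, True]) = p (z @ [False, True])"
    "pp (z @ [False, True, False, False]) = p (z @ [False, True, False, False])"
    "pp (z @ [False, False, False, False, False]) = p (z @ [False, False, False, False, False])"
    "pp (z @ [False, True, False, False, False, False]) = p (z @ [False, True, False, False, False, False])"
    using nbz by (simp add: pp_def) (rule pp_ext[OF nbz]; simp)+
  have e: "gamma0 * col8 (vec8 z) = col8 [pp (z @ [False]), pp (z @ [False, False]),
     - pp z + pp (z @ [False]) + pp (z @ [False, False]), pp (z @ [False, False, False]),
     pp (z @ [False, False, False, False]),
     - pp z + 2 * pp (z @ [False, False]) + pp (z @ [False, False, False]),
     pp z - pp (z @ [False]) - 3 * pp (z @ [False, False]) + 3 * pp (z @ [False, False, False]) + pp (z @ [False, False, False, False]),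
     - pp z - pp (z @ [False]) + 2 * pp (z @ [False, False]) + 3 * pp (z @ [False, False, False]) + pp (z @ [False, False, False, False])]"
    unfolding vec8_def by (rule g0_step)
  have v: "vec8 (z @ [False]) = [pp (z @ [False]), pp (z @ [False, False]), pp (z @ [False, True]),
     pp (z @ [False, False, False]), pp (z @ [False, False, False, False]), pp (z @ [False, True, False, False]),
     pp (z @ [False, False, False, False, False]), pp (z @ [False, True, False, False, False, False])]"
    by (simp add: vec8_def)
  have L: "[p (z @ [False]), p (z @ [False, False]),
     - p z + p (z @ [False]) + p (z @ [False, False]), p (z @ [False, False, False]),
     p (z @ [False, False, False, False]),
     - p z + 2 * p (z @ [False, False]) + p (z @ [False, False, False]),
     p z - p (z @ [False]) - 3 * p (z @ [False, False]) + 3 * p (z @ [False, False, False]) + p (z @ [False, False, False, False]),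
     - p z - p (z @ [False]) + 2 * p (z @ [False, False]) + 3 * p (z @ [False, False, False]) + p (z @ [False, False, False, False])]
    = [p (z @ [False]), p (z @ [False, False]), p (z @ [False, True]),
     p (z @ [False, False, False]), p (z @ [False, False, False, False]), p (z @ [False, True, False, False]),
     p (z @ [False, False, False, False, False]), p (z @ [False, True, False, False, False, False])]"
    using pB[of z] pD[of z] pE[of z] pF[of z] by simp
  show ?thesis by (simp only: e v q L)
qed

lemma stepT: assumes nbz: "nb z" and nl: "\<not> (z \<noteq> [] \<and> last z)"
  shows "gamma1 * col8 (vec8 z) = col8 (vec8 (z @ [True]))"
proof -
  have q: "pp (z @ [True]) = p (z @ [True])" "pp (z @ [True, False]) = p (z @ [True, False])"
    "pp (z @ [True, False, False]) = p (z @ [True, False, False])"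
    "pp (z @ [True, False, False, False]) = p (z @ [True, False, False, False])"
    "pp (z @ [True, False, False, False, False]) = p (z @ [True, False, False, False, False])"
    by (rule pp_ext1[OF nbz nl]; simp)+
  have q0: "pp (z @ [True, True]) = 0" "pp (z @ [True, True, False, False]) = 0"
    "pp (z @ [True, True, False, False, False, False]) = 0"
    by (simp_all add: pp_def nb_append)
  have e: "gamma1 * col8 (vec8 z) = col8 [pp (z @ [True]), pp (z @ [True]), 0, pp (z @ [True, False, False]),
     pp (z @ [True, False, False]), 0, pp (z @ [True, False, False, False, False]), 0]"
    unfolding vec8_def by (rule g1_step)
  have v: "vec8 (z @ [True]) = [pp (z @ [True]), pp (z @ [True, False]), pp (z @ [True, True]),
     pp (z @ [True, False, False]), pp (z @ [True, False, False, False]), pp (z @ [True, True, False, False]),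
     pp (z @ [True, False, False, False, False]), pp (z @ [True, True, False, False, False, False])]"
    by (simp add: vec8_def)
  have L: "[p (z @ [True]), p (z @ [True]), 0, p (z @ [True, False, False]),
     p (z @ [True, False, False]), 0, p (z @ [True, False, False, False, False]), 0]
    = [p (z @ [True]), p (z @ [True, False]), 0,
     p (z @ [True, False, False]), p (z @ [True, False, False, False]), 0,
     p (z @ [True, False, False, False, False]), 0]"
    using pA[of z] pC[of z] by simp
  show ?thesis by (simp only: e v q q0 L)
qed

lemma invariant: "nb z \<Longrightarrow> mat_morph 8 gamma (rev z) * u_vec = col8 (vec8 z)"
proof (induction z rule: rev_induct)
  case Nil
  have "mat_morph 8 gamma (rev []) * u_vec = u_vec" using u_carrier by (simp add: mat_morph_def)
  then show ?case by (simp add: base_vals col8_def u_vec_def)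
next
  case (snoc c z)
  have nbz: "nb z" using snoc.prems by (simp add: nb_append)
  have IH: "mat_morph 8 gamma (rev z) * u_vec = col8 (vec8 z)" using snoc.IH nbz by simp
  have Mc: "mat_morph 8 gamma (rev z) \<in> carrier_mat 8 8" by (rule mm_carrier[OF gamma_carrier])
  have "mat_morph 8 gamma (rev (z @ [c])) * u_vec = (gamma c * mat_morph 8 gamma (rev z)) * u_vec"
    by (simp add: mm_Cons)
  also have "\<dots> = gamma c * (mat_morph 8 gamma (rev z) * u_vec)"
    by (rule assoc_mult_mat[OF gamma_carrier Mc u_carrier])
  also have "\<dots> = gamma c * col8 (vec8 z)" by (simp only: IH)
  also have "\<dots> = col8 (vec8 (z @ [c]))"
  proof (cases c)
    case False
    then show ?thesis using stepF[OF nbz] by (simp add: gF)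
  next
    case True
    have nl: "\<not> (z \<noteq> [] \<and> last z)" using snoc.prems True by (simp add: nb_append)
    then show ?thesis using stepT[OF nbz nl] True by (simp add: gT)
  qed
  finally show ?case .
qed

lemma part1: "canonical_fib_rep z n \<Longrightarrow>
   (t_vec * mat_morph 8 gamma (rev z) * u_vec) $$ (0, 0) = int (V n)"
proof -
  assume c: "canonical_fib_rep z n"
  have nbz: "nb z" using c adjfree_nb unfolding canonical_fib_rep_def adjfree_def by blast
  have Mc: "mat_morph 8 gamma (rev z) \<in> carrier_mat 8 8" by (rule mm_carrier[OF gamma_carrier])
  have "t_vec * mat_morph 8 gamma (rev z) * u_vec = t_vec * (mat_morph 8 gamma (rev z) * u_vec)"
    by (rule assoc_mult_mat[OF t_carrier Mc u_carrier])
  also have "\<dots> = t_vec * col8 (vec8 z)" by (simp only: invariant[OF nbz])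
  finally have "(t_vec * mat_morph 8 gamma (rev z) * u_vec) $$ (0, 0) = pp z"
    unfolding vec8_def by (simp only: t_entry)
  also have "pp z = p z" using nbz by (simp add: pp_def)
  also have "p z = int (V n)" using canon_prefix[OF c] by (simp add: p_def V_Nc)
  finally show ?thesis .
qed

lemma mm_transpose: "mat_morph 8 (\<lambda>c. transpose_mat (gamma c)) z = transpose_mat (mat_morph 8 gamma (rev z))"
proof (induction z)
  case Nil then show ?case by (simp add: mat_morph_def)
next
  case (Cons c z)
  have Mc: "mat_morph 8 gamma (rev z) \<in> carrier_mat 8 8" by (rule mm_carrier[OF gamma_carrier])
  have "mat_morph 8 (\<lambda>c. transpose_mat (gamma c)) (c # z) = transpose_mat (gamma c) * transpose_mat (mat_morph 8 gamma (rev z))"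
    by (simp add: mm_Cons Cons.IH)
  also have "\<dots> = transpose_mat (mat_morph 8 gamma (rev z) * gamma c)"
    by (rule transpose_mult[OF Mc gamma_carrier, symmetric])
  also have "mat_morph 8 gamma (rev z) * gamma c = mat_morph 8 gamma (rev (c # z))"
    using mm_append[of gamma 8 "rev z" "[c]", OF gamma_carrier] mm_single[OF gamma_carrier] by simp
  finally show ?case .
qed

lemma part2: "fib_regular (\<lambda>n. int (V n))"
  unfolding fib_regular_def
proof (intro exI conjI allI impI)
  show "transpose_mat u_vec \<in> carrier_mat 1 8" using u_carrier by simp
  show "transpose_mat t_vec \<in> carrier_mat 8 1" using t_carrier by simp
  fix c show "transpose_mat (gamma c) \<in> carrier_mat 8 8" using gamma_carrier by simp
next
  fix z n assume c: "canonical_fib_rep z n"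
  define M where "M = mat_morph 8 gamma (rev z)"
  have Mc: "M \<in> carrier_mat 8 8" unfolding M_def by (rule mm_carrier[OF gamma_carrier])
  have tM: "t_vec * M \<in> carrier_mat 1 8" using t_carrier Mc by simp
  have "transpose_mat u_vec * mat_morph 8 (\<lambda>c. transpose_mat (gamma c)) z * transpose_mat t_vec
      = transpose_mat u_vec * transpose_mat M * transpose_mat t_vec"
    by (simp add: mm_transpose M_def)
  also have "transpose_mat u_vec * transpose_mat M = transpose_mat (M * u_vec)"
    by (rule transpose_mult[OF Mc u_carrier, symmetric])
  also have "transpose_mat (M * u_vec) * transpose_mat t_vec = transpose_mat (t_vec * (M * u_vec))"
    by (rule transpose_mult[OF t_carrier mult_carrier_mat[OF Mc u_carrier], symmetric])
  also have "t_vec * (M * u_vec) = t_vec * M * u_vec"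
    by (rule assoc_mult_mat[OF t_carrier Mc u_carrier, symmetric])
  finally have e: "transpose_mat u_vec * mat_morph 8 (\<lambda>c. transpose_mat (gamma c)) z * transpose_mat t_vec
      = transpose_mat (t_vec * M * u_vec)" .
  have dims: "t_vec * M * u_vec \<in> carrier_mat 1 1" using tM u_carrier by simp
  have "(transpose_mat (t_vec * M * u_vec)) $$ (0, 0) = (t_vec * M * u_vec) $$ (0, 0)"
    using dims by (subst index_transpose_mat(1)) auto
  then show "int (V n) = (transpose_mat u_vec * mat_morph 8 (\<lambda>c. transpose_mat (gamma c)) z * transpose_mat t_vec) $$ (0, 0)"
    using part1[OF c] e unfolding M_def by simp
qed

theorem theorem2:
  shows "(\<forall>n z. canonical_fib_rep z n \<longrightarrow>
            (t_vec * mat_morph 8 gamma (rev z) * u_vec) $$ (0, 0) = int (V n))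
         \<and> fib_regular (\<lambda>n. int (V n))"
  using part1 part2 by blast

end
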